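(* Let $n\ge 2$. For a prime $p$, let $X_p$ be the set of matrices in $\mathrm{SL}(n,\mathbb{F}_p)$ whose characteristic polynomial has a monic factor over $\mathbb{F}_p$ of degree between $1$ and $n-1$ with constant term $1$. Then $|X_p|=o(p^{n^2-1})$ as $p\to\infty$. *)

theory Defs
  imports "Jordan_Normal_Form.Char_Poly" "HOL-Library.Landau_Symbols" "HOL-Number_Theory.Cong"
begin

text \<open>Matrices over F_p are represented by integer n x n matrices with entries in {0..<p}
  (canonical residue representatives). Determinant and characteristic polynomial over F_p
  are the reductions mod p of the integer ones (both are polynomial in the entries).\<close>

definition SL_mod :: "nat \<Rightarrow> nat \<Rightarrow> int mat set" where
  "SL_mod n p = {A \<in> carrier_mat n n.
      (\<forall>i<n. \<forall>j<n. 0 \<le> A $$ (i,j) \<and> A $$ (i,j) < int p) \<and> [det A = 1] (mod int p)}"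

text \<open>A monic polynomial f over F_p of degree d divides a polynomial h over F_p iff some lift
  (monic integer polynomial of degree d) f and some integer g satisfy h = f*g coefficientwise mod p.\<close>

definition has_monic_factor_mod :: "nat \<Rightarrow> int poly \<Rightarrow> int poly \<Rightarrow> bool" where
  "has_monic_factor_mod p f h \<longleftrightarrow>
     lead_coeff f = 1 \<and> (\<exists>g :: int poly. \<forall>k. [coeff h k = coeff (f * g) k] (mod int p))"

definition X_set :: "nat \<Rightarrow> nat \<Rightarrow> int mat set" where
  "X_set n p = {A \<in> SL_mod n p. \<exists>f :: int poly.
      1 \<le> degree f \<and> degree f \<le> n - 1 \<and> [coeff f 0 = 1] (mod int p) \<and>
      has_monic_factor_mod p f (char_poly A)}"

end

theory Submission
  imports Defs
begin



lemma mult_entry: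
  assumes "A \<in> carrier_mat nr m" "B \<in> carrier_mat m nc" "i < nr" "j < nc"
  shows "(A * B) $$ (i,j) = (\<Sum>k<m. A $$ (i,k) * B $$ (k,j))"
  using assms by (auto simp: scalar_prod_def lessThan_atLeast0 intro!: sum.cong)

lemma pow_mat_commute:
  assumes "A \<in> carrier_mat n n"
  shows "A * A ^\<^sub>m k = A ^\<^sub>m k * A"
proof (induction k)
  case 0 then show ?case using assms by simp
next
  case (Suc k)
  have "A * A ^\<^sub>m Suc k = (A * A ^\<^sub>m k) * A"
    using assms by (simp add: assoc_mult_mat[symmetric, of A n n "A ^\<^sub>m k" n A n])
  also have "\<dots> = A ^\<^sub>m Suc k * A" using Suc by simp
  finally show ?case .
qed

lemma pow_mat_Suc_left:
  assumes "A \<in> carrier_mat n n"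
  shows "A ^\<^sub>m Suc k = A * A ^\<^sub>m k"
  using pow_mat_commute[OF assms] by simp

definition mcong :: "int \<Rightarrow> int mat \<Rightarrow> int mat \<Rightarrow> bool" where
  "mcong m A B \<longleftrightarrow> dim_row A = dim_row B \<and> dim_col A = dim_col B \<and>
     (\<forall>i<dim_row A. \<forall>j<dim_col A. [A $$ (i,j) = B $$ (i,j)] (mod m))"

lemma mcongD: "mcong m A B \<Longrightarrow> i < dim_row A \<Longrightarrow> j < dim_col A \<Longrightarrow> [A $$ (i,j) = B $$ (i,j)] (mod m)"
  unfolding mcong_def by auto

lemma mcong_refl[simp]: "mcong m A A" unfolding mcong_def by auto

lemma mcong_sym: "mcong m A B \<Longrightarrow> mcong m B A" unfolding mcong_def by (auto simp: cong_sym)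

lemma mcong_trans: "mcong m A B \<Longrightarrow> mcong m B C \<Longrightarrow> mcong m A C"
  unfolding mcong_def by (metis cong_trans)

lemma mcong_mult:
  assumes A: "A \<in> carrier_mat nr k" and B: "B \<in> carrier_mat k nc"
    and "mcong m A A'" "mcong m B B'"
  shows "mcong m (A * B) (A' * B')"
proof -
  have A': "A' \<in> carrier_mat nr k" and B': "B' \<in> carrier_mat k nc"
    using assms unfolding mcong_def carrier_mat_def by auto
  show ?thesis unfolding mcong_def
  proof (intro conjI allI impI)
    fix i j assume i: "i < dim_row (A * B)" and j: "j < dim_col (A * B)"
    have "(A * B) $$ (i,j) = (\<Sum>l<k. A $$ (i,l) * B $$ (l,j))"
      using A B i j by (intro mult_entry) auto
    also have "[\<dots> = (\<Sum>l<k. A' $$ (i,l) * B' $$ (l,j))] (mod m)"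
      using assms i j by (intro cong_sum cong_mult; auto intro!: mcongD)
    also have "(\<Sum>l<k. A' $$ (i,l) * B' $$ (l,j)) = (A' * B') $$ (i,j)"
      using A' B' i j A B by (intro mult_entry[symmetric]) auto
    finally show "[(A * B) $$ (i,j) = (A' * B') $$ (i,j)] (mod m)" .
  qed (use A B A' B' in auto)
qed

lemma mcong_pow:
  assumes A: "A \<in> carrier_mat n n" and "mcong m A A'"
  shows "mcong m (A ^\<^sub>m k) (A' ^\<^sub>m k)"
proof (induction k)
  case 0 then show ?case using assms unfolding mcong_def by auto
next
  case (Suc k)
  then show ?case using assms by (simp add: mcong_mult[of _ n n _ n])
qed

lemma mcong_det:
  assumes A: "A \<in> carrier_mat n n" and "mcong m A A'"
  shows "[det A = det A'] (mod m)"
proof -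
  have A': "A' \<in> carrier_mat n n" using assms unfolding mcong_def carrier_mat_def by auto
  have "[(\<Sum> p \<in> {p. p permutes {0 ..< n}}. signof p * (\<Prod> i = 0 ..< n. A $$ (i, p i)))
       = (\<Sum> p \<in> {p. p permutes {0 ..< n}}. signof p * (\<Prod> i = 0 ..< n. A' $$ (i, p i)))] (mod m)"
  proof (intro cong_sum cong_mult cong_refl cong_prod)
    fix p i assume p: "p \<in> {p. p permutes {0 ..< n}}" and i: "i \<in> {0..<n}"
    have "p i < n" using p i by (auto simp: permutes_in_image)
    then show "[A $$ (i, p i) = A' $$ (i, p i)] (mod m)" using assms i by (intro mcongD) auto
  qed
  then show ?thesis using det_def'[OF A] det_def'[OF A'] by simp
qed

lemma coeff_x_mult: "coeff ([:0,1:] * (q :: 'a :: comm_ring_1 poly)) k = (if k = 0 then 0 else coeff q (k-1))"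
  by (cases k) (auto simp: coeff_pCons)

lemma coeff_pCons0: "coeff (pCons 0 q) k = (if k = 0 then 0 else coeff q (k-1))"
  by (cases k) (auto simp: coeff_pCons)

lemma cayley_hamilton_entry:
  fixes A :: "'a::comm_ring_1 mat"
  assumes A: "A \<in> carrier_mat n n" and i: "i < n" and j: "j < n"
  shows "(\<Sum>k\<le>n. coeff (char_poly A) k * (A ^\<^sub>m k) $$ (i,j)) = 0"
proof -
  define C where "C = char_poly_matrix A"
  define Adj where "Adj = adj_mat C"
  have C: "C \<in> carrier_mat n n" using A by (simp add: C_def)
  have Adj: "Adj \<in> carrier_mat n n" and CA: "C * Adj = char_poly A \<cdot>\<^sub>m 1\<^sub>m n"
    using adj_mat[OF C] by (auto simp: Adj_def C_def char_poly_def)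
  define c where "c k = coeff (char_poly A) k" for k
  define b where "b k l j = coeff (Adj $$ (l,j)) k" for k l j
  define P where "P k i l = (A ^\<^sub>m k) $$ (i,l)" for k i l
  have E: "c k * (if l = j then 1 else 0) = (if k = 0 then 0 else b (k-1) l j) - (\<Sum>m<n. A $$ (l,m) * b k m j)"
    if l: "l < n" for k l
  proof -
    have "(C * Adj) $$ (l,j) = (\<Sum>m<n. C $$ (l,m) * Adj $$ (m,j))"
      using C Adj l j by (intro mult_entry) auto
    also have "\<dots> = (\<Sum>m<n. ((if l = m then [:0,1:] else 0) + [:- A $$ (l,m):]) * Adj $$ (m,j))"
      using A l by (intro sum.cong) (auto simp: C_def char_poly_matrix_def)
    finally have "coeff ((C * Adj) $$ (l,j)) k = (\<Sum>m<n. coeff (((if l = m then [:0,1:] else 0) + [:- A $$ (l,m):]) * Adj $$ (m,j)) k)"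
      by (simp add: coeff_sum)
    also have "\<dots> = (\<Sum>m<n. (if l = m then (if k = 0 then 0 else b (k-1) l j) else 0) - A $$ (l,m) * b k m j)"
      by (intro sum.cong refl) (auto simp: distrib_right coeff_x_mult coeff_pCons0 b_def)
    also have "\<dots> = (\<Sum>m<n. (if l = m then (if k = 0 then 0 else b (k-1) l j) else 0)) - (\<Sum>m<n. A $$ (l,m) * b k m j)"
      by (rule sum_subtractf)
    also have "(\<Sum>m<n. (if l = m then (if k = 0 then 0 else b (k-1) l j) else 0)) = (if k = 0 then 0 else b (k-1) l j)"
      using l by (subst sum.delta') auto
    finally have X: "coeff ((C * Adj) $$ (l,j)) k = (if k = 0 then 0 else b (k-1) l j) - (\<Sum>m<n. A $$ (l,m) * b k m j)" .
    show ?thesis using X CA l j by (cases "l = j") (auto simp: c_def)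
  qed
  define G where "G k = (\<Sum>l<n. P k i l * (if k = 0 then 0 else b (k-1) l j))" for k
  have step: "c k * P k i j = G k - G (Suc k)" for k
  proof -
    have "(\<Sum>l<n. P k i l * (c k * (if l = j then 1 else 0))) = (\<Sum>l<n. if j = l then c k * P k i j else 0)"
      by (intro sum.cong) auto
    also have "\<dots> = c k * P k i j" using j by (subst sum.delta') auto
    finally have "c k * P k i j = (\<Sum>l<n. P k i l * (c k * (if l = j then 1 else 0)))" by simp
    also have "\<dots> = (\<Sum>l<n. P k i l * ((if k = 0 then 0 else b (k-1) l j) - (\<Sum>m<n. A $$ (l,m) * b k m j)))"
      by (intro sum.cong refl) (simp add: E)
    also have "\<dots> = G k - (\<Sum>l<n. \<Sum>m<n. P k i l * (A $$ (l,m) * b k m j))"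
      by (simp add: G_def right_diff_distrib sum_subtractf sum_distrib_left)
    also have "(\<Sum>l<n. \<Sum>m<n. P k i l * (A $$ (l,m) * b k m j)) = (\<Sum>m<n. (\<Sum>l<n. P k i l * A $$ (l,m)) * b k m j)"
      by (subst sum.swap) (simp add: sum_distrib_right mult.assoc)
    also have "\<dots> = G (Suc k)"
    proof -
      have "(\<Sum>l<n. P k i l * A $$ (l,m)) = P (Suc k) i m" if "m < n" for m
        using A i that mult_entry[of "A ^\<^sub>m k" n n A n i m] by (simp add: P_def)
      then show ?thesis by (simp add: G_def)
    qed
    finally show ?thesis .
  qed
  define D where "D = (\<Sum>l<n. \<Sum>m<n. degree (Adj $$ (l,m)))"
  have deg: "degree (Adj $$ (l,m)) \<le> D" if "l < n" "m < n" for l m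
  proof -
    have "degree (Adj $$ (l,m)) \<le> (\<Sum>m<n. degree (Adj $$ (l,m)))"
      using that by (intro member_le_sum) auto
    also have "\<dots> \<le> D" unfolding D_def using that by (intro member_le_sum[of l]) auto
    finally show ?thesis .
  qed
  define N where "N = n + D + 2"
  have "(\<Sum>k<N. c k * P k i j) = (\<Sum>k<N. G k - G (Suc k))" by (simp add: step)
  also have "\<dots> = G 0 - G N" using sum_lessThan_telescope'[of G N] by simp
  also have "G N = 0"
  proof -
    have "b (N-1) l j = 0" if "l < n" for l
      unfolding b_def using deg[OF that j] by (intro coeff_eq_0) (simp add: N_def)
    then show ?thesis by (simp add: G_def N_def)
  qed
  finally have sumN: "(\<Sum>k<N. c k * P k i j) = 0" by (simp add: G_def)
  have degc: "degree (char_poly A) = n" using degree_monic_char_poly[OF A] by simp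
  have "(\<Sum>k<N. c k * P k i j) = (\<Sum>k\<le>n. c k * P k i j)"
  proof (rule sum.mono_neutral_right)
    show "{..n} \<subseteq> {..<N}" by (auto simp: N_def)
    show "\<forall>k\<in>{..<N} - {..n}. c k * P k i j = 0" using degc by (auto simp: c_def coeff_eq_0)
  qed auto
  with sumN show ?thesis by (simp add: c_def P_def)
qed

definition kry :: "nat \<Rightarrow> 'a :: comm_ring_1 mat \<Rightarrow> 'a mat" where
  "kry n A = mat n n (\<lambda>(i,j). (A ^\<^sub>m j) $$ (i,0))"

fun uu :: "'a::comm_ring_1 \<Rightarrow> nat \<Rightarrow> nat \<Rightarrow> 'a" where
  "uu s 0 j = s ^ j"
| "uu s (Suc l) 0 = 0"
| "uu s (Suc l) (Suc j) = uu s l j + s * uu s (Suc l) j"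

lemma uu_zero: "j < l \<Longrightarrow> uu s l j = 0"
proof (induction j arbitrary: l)
  case 0 then show ?case by (cases l) auto
next
  case (Suc j) then show ?case by (cases l) auto
qed

lemma uu_diag: "uu s j j = 1"
  by (induction j) (auto simp: uu_zero)

lemma shift_pow_entry:
  fixes A :: "'a::comm_ring_1 mat"
  assumes A: "A \<in> carrier_mat n n" and i: "i < n"
  shows "((A + s \<cdot>\<^sub>m 1\<^sub>m n) ^\<^sub>m j) $$ (i,0) = (\<Sum>l\<le>j. uu s l j * (A ^\<^sub>m l) $$ (i,0))"
  using i
proof (induction j arbitrary: i)
  case 0
  then show ?case using A by simp
next
  case (Suc j)
  define As where "As = A + s \<cdot>\<^sub>m 1\<^sub>m n"
  have As: "As \<in> carrier_mat n n" using A by (simp add: As_def)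
  define X where "X l m = (A ^\<^sub>m l) $$ (m,0)" for l m
  have IH: "(As ^\<^sub>m j) $$ (m,0) = (\<Sum>l\<le>j. uu s l j * X l m)" if "m < n" for m
    using Suc.IH[OF that] by (simp add: As_def X_def)
  have XS: "(\<Sum>m<n. A $$ (i,m) * X l m) = X (Suc l) i" for l
    using A Suc.prems mult_entry[of A n n "A ^\<^sub>m l" n i 0] pow_mat_Suc_left[OF A, of l]
    by (simp add: X_def)
  have "(As ^\<^sub>m Suc j) $$ (i,0) = (As * As ^\<^sub>m j) $$ (i,0)"
    using pow_mat_Suc_left[OF As] by simp
  also have "\<dots> = (\<Sum>m<n. As $$ (i,m) * (As ^\<^sub>m j) $$ (m,0))"
    using As Suc.prems by (intro mult_entry) auto
  also have "\<dots> = (\<Sum>m<n. (A $$ (i,m) + (if i = m then s else 0)) * (\<Sum>l\<le>j. uu s l j * X l m))"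
    using A Suc.prems IH by (intro sum.cong) (auto simp: As_def)
  also have "\<dots> = (\<Sum>m<n. A $$ (i,m) * (\<Sum>l\<le>j. uu s l j * X l m)) + (\<Sum>m<n. (if i = m then s * (\<Sum>l\<le>j. uu s l j * X l m) else 0))"
    by (simp add: distrib_right sum.distrib if_distrib[of "\<lambda>x. x * _"] cong: if_cong)
  also have "(\<Sum>m<n. (if i = m then s * (\<Sum>l\<le>j. uu s l j * X l m) else 0)) = s * (\<Sum>l\<le>j. uu s l j * X l i)"
    using Suc.prems by (subst sum.delta') auto
  also have "(\<Sum>m<n. A $$ (i,m) * (\<Sum>l\<le>j. uu s l j * X l m)) = (\<Sum>l\<le>j. uu s l j * X (Suc l) i)"
  proof -
    have "(\<Sum>m<n. A $$ (i,m) * (\<Sum>l\<le>j. uu s l j * X l m)) = (\<Sum>l\<le>j. uu s l j * (\<Sum>m<n. A $$ (i,m) * X l m))"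
      by (simp add: sum_distrib_left sum_distrib_right mult_ac sum.swap[of _ "{..<n}"])
    then show ?thesis by (simp add: XS)
  qed
  also have "s * (\<Sum>l\<le>j. uu s l j * X l i) = s * uu s 0 j * X 0 i + (\<Sum>l<j. s * uu s (Suc l) j * X (Suc l) i)"
    by (simp add: sum.atMost_shift sum_distrib_left distrib_left mult_ac)
  also have "(\<Sum>l<j. s * uu s (Suc l) j * X (Suc l) i) = (\<Sum>l\<le>j. s * uu s (Suc l) j * X (Suc l) i)"
    by (simp add: uu_zero lessThan_Suc_atMost[symmetric])
  finally have L: "(As ^\<^sub>m Suc j) $$ (i,0) = (\<Sum>l\<le>j. uu s l j * X (Suc l) i) + (s * uu s 0 j * X 0 i + (\<Sum>l\<le>j. s * uu s (Suc l) j * X (Suc l) i))" .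
  have R: "(\<Sum>l\<le>Suc j. uu s l (Suc j) * X l i) = uu s 0 (Suc j) * X 0 i + (\<Sum>l\<le>j. uu s (Suc l) (Suc j) * X (Suc l) i)"
    by (rule sum.atMost_Suc_shift)
  also have "\<dots> = s * uu s 0 j * X 0 i + (\<Sum>l\<le>j. uu s l j * X (Suc l) i) + (\<Sum>l\<le>j. s * uu s (Suc l) j * X (Suc l) i)"
    by (simp add: distrib_left distrib_right sum.distrib[symmetric] mult_ac)
  finally show ?case using L by (simp add: As_def X_def)
qed

lemma kry_shift:
  fixes A :: "'a::comm_ring_1 mat"
  assumes A: "A \<in> carrier_mat n n"
  shows "det (kry n (A + s \<cdot>\<^sub>m 1\<^sub>m n)) = det (kry n A)"
proof -
  define U where "U = mat n n (\<lambda>(l,j). uu s l j)"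
  have U: "U \<in> carrier_mat n n" by (simp add: U_def)
  have K: "kry n A \<in> carrier_mat n n" by (simp add: kry_def)
  have eq: "kry n (A + s \<cdot>\<^sub>m 1\<^sub>m n) = kry n A * U"
  proof (rule eq_matI)
    fix i j assume i: "i < dim_row (kry n A * U)" and j: "j < dim_col (kry n A * U)"
    then have i: "i < n" and j: "j < n" using K U by auto
    have "(kry n A * U) $$ (i,j) = (\<Sum>l<n. (A ^\<^sub>m l) $$ (i,0) * uu s l j)"
      using K U i j by (subst mult_entry[of _ n n _ n]) (auto simp: kry_def U_def)
    also have "\<dots> = (\<Sum>l\<le>j. (A ^\<^sub>m l) $$ (i,0) * uu s l j)"
    proof (rule sum.mono_neutral_right)
      show "{..j} \<subseteq> {..<n}" using j by auto
      show "\<forall>l\<in>{..<n} - {..j}. (A ^\<^sub>m l) $$ (i, 0) * uu s l j = 0" by (auto simp: uu_zero)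
    qed auto
    also have "\<dots> = ((A + s \<cdot>\<^sub>m 1\<^sub>m n) ^\<^sub>m j) $$ (i,0)"
      using shift_pow_entry[OF A i] by (simp add: mult_ac)
    finally show "kry n (A + s \<cdot>\<^sub>m 1\<^sub>m n) $$ (i, j) = (kry n A * U) $$ (i, j)"
      using i j by (simp add: kry_def)
  qed (auto simp: kry_def U_def)
  have "det U = 1"
  proof -
    have ut: "upper_triangular U" unfolding upper_triangular_def U_def by (auto simp: uu_zero)
    have "diag_mat U = map (\<lambda>_. 1) [0..<n]" unfolding diag_mat_def U_def by (auto simp: uu_diag)
    then show ?thesis using det_upper_triangular[OF ut U] by (simp add: map_replicate_const)
  qed
  then show ?thesis using eq det_mult[OF K U] by simp
qed

lemma sum_single:
  assumes "finite S" "a \<in> S" "\<And>i. i \<in> S \<Longrightarrow> i \<noteq> a \<Longrightarrow> f i = 0"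
  shows "sum f S = f a"
proof -
  have "sum f S = sum f {a}" using assms by (intro sum.mono_neutral_right) auto
  then show ?thesis by simp
qed

lemma coeff_mult_bound:
  fixes a b :: "'a::comm_semiring_0 poly"
  assumes "degree a \<le> da" "degree b \<le> db"
  shows "coeff (a * b) (da + db) = coeff a da * coeff b db"
proof -
  have "coeff (a * b) (da + db) = (\<Sum>i\<le>da+db. coeff a i * coeff b (da + db - i))"
    by (rule coeff_mult)
  also have "\<dots> = coeff a da * coeff b (da + db - da)"
  proof (rule sum_single)
    fix i assume "i \<in> {..da+db}" "i \<noteq> da"
    then show "coeff a i * coeff b (da + db - i) = 0"
    proof (cases "i < da")
      case True
      have "coeff b (da + db - i) = 0" by (rule coeff_eq_0) (use assms True in linarith)
      then show ?thesis by simp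
    next
      case False
      have "coeff a i = 0" by (rule coeff_eq_0) (use assms False \<open>i \<noteq> da\<close> in linarith)
      then show ?thesis by simp
    qed
  qed auto
  finally show ?thesis by simp
qed

lemma prod_poly_bound:
  fixes f :: "'b \<Rightarrow> 'a::comm_semiring_1 poly"
  assumes "finite I" "\<And>i. i \<in> I \<Longrightarrow> degree (f i) \<le> d i"
  shows "degree (prod f I) \<le> sum d I \<and> coeff (prod f I) (sum d I) = (\<Prod>i\<in>I. coeff (f i) (d i))"
  using assms
proof (induction I rule: finite_induct)
  case empty then show ?case by simp
next
  case (insert x F)
  have dx: "degree (f x) \<le> d x" using insert by auto
  have IH: "degree (prod f F) \<le> sum d F" "coeff (prod f F) (sum d F) = (\<Prod>i\<in>F. coeff (f i) (d i))"
    using insert by auto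
  have "degree (f x * prod f F) \<le> degree (f x) + degree (prod f F)" by (rule degree_mult_le)
  also have "\<dots> \<le> d x + sum d F" using dx IH by simp
  finally have "degree (prod f (insert x F)) \<le> sum d (insert x F)" using insert by simp
  moreover have "coeff (f x * prod f F) (d x + sum d F) = coeff (f x) (d x) * coeff (prod f F) (sum d F)"
    by (rule coeff_mult_bound[OF dx IH(1)])
  ultimately show ?case using insert IH by simp
qed

definition plm :: "nat \<Rightarrow> int mat \<Rightarrow> int \<Rightarrow> int \<Rightarrow> int mat" where
  "plm n B s t = mat n n (\<lambda>(i,j). B $$ (i,j) + (if i = j then s else 0) + (if i = Suc j then t else 0))"

definition XP :: "nat \<Rightarrow> int mat \<Rightarrow> int poly mat" where
  "XP n B = mat n n (\<lambda>(i,j). [: B $$ (i,j), (if i = Suc j then 1 else 0) :])"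

lemma XP_eval: "map_mat (\<lambda>q. poly q t) (XP n B) = plm n B 0 t"
  by (rule eq_matI) (auto simp: XP_def plm_def)

lemma XP_pow_entry:
  assumes i: "i < n"
  shows "degree ((XP n B ^\<^sub>m j) $$ (i,0)) \<le> j \<and> coeff ((XP n B ^\<^sub>m j) $$ (i,0)) j = (if i = j then 1 else 0)"
  using i
proof (induction j arbitrary: i)
  case 0 then show ?case by (simp add: XP_def)
next
  case (Suc j)
  define X where "X = XP n B"
  have X: "X \<in> carrier_mat n n" by (simp add: X_def XP_def)
  have e: "(X ^\<^sub>m Suc j) $$ (i,0) = (\<Sum>m<n. X $$ (i,m) * (X ^\<^sub>m j) $$ (m,0))"
    using pow_mat_Suc_left[OF X, of j] mult_entry[of X n n "X ^\<^sub>m j" n i 0] X Suc.prems by simp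
  have dX: "degree (X $$ (i,m)) \<le> 1" if "m < n" for m
    using Suc.prems that by (auto simp: X_def XP_def)
  have "degree (\<Sum>m<n. X $$ (i,m) * (X ^\<^sub>m j) $$ (m,0)) \<le> Suc j"
  proof (rule degree_sum_le)
    fix m assume m: "m \<in> {..<n}"
    have "degree (X $$ (i,m) * (X ^\<^sub>m j) $$ (m,0)) \<le> degree (X $$ (i,m)) + degree ((X ^\<^sub>m j) $$ (m,0))"
      by (rule degree_mult_le)
    also have "\<dots> \<le> Suc j" using dX[of m] Suc.IH[of m] m by (simp add: X_def)
    finally show "degree (X $$ (i,m) * (X ^\<^sub>m j) $$ (m,0)) \<le> Suc j" .
  qed simp
  moreover have "coeff (\<Sum>m<n. X $$ (i,m) * (X ^\<^sub>m j) $$ (m,0)) (Suc j) = (if i = Suc j then 1 else 0)"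
  proof -
    have c: "coeff (X $$ (i,m) * (X ^\<^sub>m j) $$ (m,0)) (1 + j) = (if i = Suc m \<and> m = j then 1 else 0)" if m: "m < n" for m
      using coeff_mult_bound[OF dX[OF m], of "(X ^\<^sub>m j) $$ (m,0)" j] Suc.IH[OF m] Suc.prems m
      by (auto simp: X_def XP_def)
    have "coeff (\<Sum>m<n. X $$ (i,m) * (X ^\<^sub>m j) $$ (m,0)) (Suc j) = (\<Sum>m<n. if i = Suc m \<and> m = j then 1 else 0)"
      unfolding coeff_sum using c by (intro sum.cong) auto
    also have "\<dots> = (if i = Suc j then 1 else 0)"
    proof (cases "i = Suc j")
      case True
      then have "j < n" using Suc.prems by simp
      then show ?thesis using True by (subst sum_single[of _ j]) auto
    qed (auto intro!: sum.neutral)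
    finally show ?thesis .
  qed
  ultimately show ?case using e by (simp add: X_def)
qed

lemma kry_poly:
  assumes B: "B \<in> carrier_mat n n"
  shows "\<exists>q. degree q \<le> (\<Sum>i<n. i) \<and> coeff q (\<Sum>i<n. i) = 1 \<and> (\<forall>t. poly q t = det (kry n (plm n B 0 t)))"
proof -
  define K where "K = kry n (XP n B)"
  have K: "K \<in> carrier_mat n n" by (simp add: K_def kry_def)
  define N where "N = (\<Sum>i<n. i)"
  define P where "P = {p. p permutes {0..<n}}"
  have Kent: "degree (K $$ (i,j)) \<le> j \<and> coeff (K $$ (i,j)) j = (if i = j then 1 else 0)" if "i < n" "j < n" for i j
    using XP_pow_entry[of i n B j] that by (simp add: K_def kry_def)
  have trm: "degree (signof p * (\<Prod>i = 0..<n. K $$ (i, p i))) \<le> N \<and>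
      coeff (signof p * (\<Prod>i = 0..<n. K $$ (i, p i))) N = (if p = id then 1 else 0)" if p: "p \<in> P" for p
  proof -
    have pp: "p permutes {0..<n}" using p by (simp add: P_def)
    have pin: "p i < n" if "i < n" for i using pp that by (auto simp: permutes_in_image)
    have sumeq: "(\<Sum>i = 0..<n. p i) = N"
      unfolding N_def lessThan_atLeast0 using sum.permute[OF pp, of "\<lambda>i. i"] by (simp add: comp_def)
    have pb: "degree (\<Prod>i = 0..<n. K $$ (i, p i)) \<le> (\<Sum>i = 0..<n. p i) \<and>
       coeff (\<Prod>i = 0..<n. K $$ (i, p i)) (\<Sum>i = 0..<n. p i) = (\<Prod>i = 0..<n. coeff (K $$ (i, p i)) (p i))"
      using Kent pin by (intro prod_poly_bound) auto
    have pc: "(\<Prod>i = 0..<n. coeff (K $$ (i, p i)) (p i)) = (if p = id then 1 else 0)"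
    proof (cases "p = id")
      case True then show ?thesis using Kent by (auto intro!: prod.neutral)
    next
      case False
      then obtain i where i: "p i \<noteq> i" by (meson eq_id_iff)
      then have "i < n" using pp by (meson atLeastLessThan_iff permutes_not_in zero_le)
      then have "coeff (K $$ (i, p i)) (p i) = 0" using Kent[OF _ pin] i by auto
      then have "(\<Prod>i = 0..<n. coeff (K $$ (i, p i)) (p i)) = 0"
        using \<open>i < n\<close> by (intro prod_zero bexI[of _ i]) auto
      then show ?thesis using False by simp
    qed
    show ?thesis using pb pc sumeq by (auto simp: sign_def)
  qed
  have detK: "det K = (\<Sum>p\<in>P. signof p * (\<Prod>i = 0..<n. K $$ (i, p i)))"
    using det_def'[OF K] by (simp add: P_def)
  have finP: "finite P" unfolding P_def by (rule finite_permutations) auto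
  have "degree (det K) \<le> N" unfolding detK by (rule degree_sum_le) (use trm finP in auto)
  moreover have "coeff (det K) N = 1"
  proof -
    have "coeff (det K) N = (\<Sum>p\<in>P. if p = id then 1 else 0)"
      unfolding detK coeff_sum using trm by (intro sum.cong) auto
    also have "\<dots> = 1" using finP by (subst sum_single[of _ id]) (auto simp: P_def permutes_id)
    finally show ?thesis .
  qed
  moreover have "poly (det K) t = det (kry n (plm n B 0 t))" for t
  proof -
    have "poly (det K) t = det (map_mat (\<lambda>q. poly q t) K)"
      by (rule comm_ring_hom.hom_det[OF poly_hom.comm_ring_hom_axioms, symmetric])
    also have "map_mat (\<lambda>q. poly q t) K = kry n (map_mat (\<lambda>q. poly q t) (XP n B))"
    proof -
      have X: "XP n B \<in> carrier_mat n n" by (simp add: XP_def)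
      have "map_mat (\<lambda>q. poly q t) (XP n B ^\<^sub>m j) = (map_mat (\<lambda>q. poly q t) (XP n B)) ^\<^sub>m j" for j
        by (rule semiring_hom.mat_hom_pow[OF poly_hom.semiring_hom_axioms X])
      note H = this
      show ?thesis unfolding K_def kry_def
      proof (rule eq_matI)
        fix i j assume "i < dim_row (mat n n (\<lambda>(i, j). (map_mat (\<lambda>q. poly q t) (XP n B) ^\<^sub>m j) $$ (i, 0)))"
          "j < dim_col (mat n n (\<lambda>(i, j). (map_mat (\<lambda>q. poly q t) (XP n B) ^\<^sub>m j) $$ (i, 0)))"
        then have i: "i < n" and j: "j < n" by auto
        have "(map_mat (\<lambda>q. poly q t) (XP n B ^\<^sub>m j)) $$ (i,0) = poly ((XP n B ^\<^sub>m j) $$ (i,0)) t"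
          using X i by simp
        then show "map_mat (\<lambda>q. poly q t) (mat n n (\<lambda>(i, j). (XP n B ^\<^sub>m j) $$ (i, 0))) $$ (i, j) =
          mat n n (\<lambda>(i, j). (map_mat (\<lambda>q. poly q t) (XP n B) ^\<^sub>m j) $$ (i, 0)) $$ (i, j)"
          using i j by (simp add: H)
      qed auto
    qed
    finally show ?thesis by (simp add: XP_eval)
  qed
  ultimately show ?thesis unfolding N_def by blast
qed



lemma roots_mod_card:
  fixes q :: "int poly" and p :: nat
  assumes p: "prime p" and nz: "\<not> int p dvd coeff q k"
  shows "card {x \<in> {0..<int p}. int p dvd poly q x} \<le> degree q"
  using nz
proof (induction "degree q" arbitrary: q k rule: less_induct)
  case less
  let ?R = "\<lambda>q. {x \<in> {0..<int p}. int p dvd poly q x}"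
  show ?case
  proof (cases "?R q = {}")
    case True show ?thesis unfolding True by simp
  next
    case False
    then obtain a where a: "a \<in> {0..<int p}" "int p dvd poly q a" by auto
    define r where "r = synthetic_div q a"
    have qr: "q = [:-a, 1:] * r + [:poly q a:]" unfolding r_def by (rule synthetic_div_correct'[symmetric])
    have evq: "poly q x = (x - a) * poly r x + poly q a" for x
      by (subst qr) (simp add: algebra_simps)
    have dq: "degree q > 0"
    proof (rule ccontr)
      assume "\<not> degree q > 0"
      then have "degree q = 0" by simp
      then have "coeff q k' = 0" if "k' > 0" for k' using that by (intro coeff_eq_0) auto
      then have "k = 0" using less.prems by (cases k) auto
      moreover have "poly q a = coeff q 0" using \<open>degree q = 0\<close>
        by (metis degree_0_id poly_pCons poly_0 mult_zero_right add.right_neutral)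
      ultimately show False using a less.prems by simp
    qed
    have dr: "degree r < degree q" using dq by (simp add: r_def degree_synthetic_div)
    have "\<exists>k'. \<not> int p dvd coeff r k'"
    proof (rule ccontr)
      assume "\<not> (\<exists>k'. \<not> int p dvd coeff r k')"
      then have allr: "int p dvd coeff r k'" for k' by auto
      have "coeff q k = - a * coeff r k + (if k = 0 then 0 else coeff r (k - 1)) + (if k = 0 then poly q a else 0)"
        by (subst qr) (cases k, auto simp: coeff_pCons)
      moreover have "int p dvd - a * coeff r k + (if k = 0 then 0 else coeff r (k - 1)) + (if k = 0 then poly q a else 0)"
        using allr a by auto
      ultimately show False using less.prems by simp
    qed
    then obtain k' where k': "\<not> int p dvd coeff r k'" by auto
    have IH: "card (?R r) \<le> degree r" using less.hyps[OF dr k'] .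
    have sub: "?R q \<subseteq> insert a (?R r)"
    proof
      fix x assume x: "x \<in> ?R q"
      show "x \<in> insert a (?R r)"
      proof (cases "x = a")
        case False
        have "int p dvd (x - a) * poly r x"
          using x a evq[of x] by (metis (no_types, lifting) add_diff_cancel_right' dvd_diff mem_Collect_eq)
        moreover have "\<not> int p dvd (x - a)"
        proof
          assume "int p dvd (x - a)"
          then have "[x = a] (mod int p)" by (simp add: cong_iff_dvd_diff)
          then have "x = a" using x a by (intro cong_less_imp_eq_int) auto
          with False show False by simp
        qed
        moreover have "prime (int p)" using p by simp
        ultimately have "int p dvd poly r x" using prime_dvd_mult_iff by blast
        then show ?thesis using x by auto
      qed simp
    qed
    have finR: "finite (?R r)" by (rule finite_subset[of _ "{0..<int p}"]) auto
    have "card (?R q) \<le> card (insert a (?R r))" by (rule card_mono[OF _ sub]) (use finR in auto)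
    also have "\<dots> \<le> Suc (card (?R r))"
    proof -
      have "finite (?R r)" by (rule finite_subset[of _ "{0..<int p}"]) auto
      then show ?thesis by (simp add: card_insert_if)
    qed
    also have "\<dots> \<le> degree q" using IH dr by simp
    finally show ?thesis .
  qed
qed

lemma char_poly_eval:
  fixes A :: "'a::comm_ring_1 mat"
  assumes A: "A \<in> carrier_mat n n"
  shows "poly (char_poly A) s = det (s \<cdot>\<^sub>m 1\<^sub>m n - A)"
proof -
  have "poly (char_poly A) s = det (map_mat (\<lambda>q. poly q s) (char_poly_matrix A))"
    unfolding char_poly_def by (rule comm_ring_hom.hom_det[OF poly_hom.comm_ring_hom_axioms, symmetric])
  also have "map_mat (\<lambda>q. poly q s) (char_poly_matrix A) = s \<cdot>\<^sub>m 1\<^sub>m n - A"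
    using A by (intro eq_matI) (auto simp: char_poly_matrix_def)
  finally show ?thesis .
qed

lemma char_poly_coeff0:
  fixes A :: "'a::comm_ring_1 mat"
  assumes A: "A \<in> carrier_mat n n"
  shows "coeff (char_poly A) 0 = (-1) ^ n * det A"
proof -
  have "coeff (char_poly A) 0 = poly (char_poly A) 0" by (simp add: poly_0_coeff_0)
  also have "\<dots> = det (0 \<cdot>\<^sub>m 1\<^sub>m n - A)" by (rule char_poly_eval[OF A])
  also have "0 \<cdot>\<^sub>m 1\<^sub>m n - A = (-1) \<cdot>\<^sub>m A" using A by (intro eq_matI) auto
  also have "det ((-1) \<cdot>\<^sub>m A) = (-1) ^ n * det A" using A by simp
  finally show ?thesis .
qed




lemma mcong_kry:
  assumes A: "A \<in> carrier_mat n n" and c: "mcong m A A'"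
  shows "mcong m (kry n A) (kry n A')"
  unfolding mcong_def
proof (intro conjI allI impI)
  fix i j assume i: "i < dim_row (kry n A)" and j: "j < dim_col (kry n A)"
  then have i: "i < n" and j: "j < n" by (auto simp: kry_def)
  have "mcong m (A ^\<^sub>m j) (A' ^\<^sub>m j)" by (rule mcong_pow[OF A c])
  then have "[(A ^\<^sub>m j) $$ (i,0) = (A' ^\<^sub>m j) $$ (i,0)] (mod m)"
    using A i by (intro mcongD) auto
  then show "[kry n A $$ (i, j) = kry n A' $$ (i, j)] (mod m)" using i j by (simp add: kry_def)
qed (auto simp: kry_def)

lemma A_kry:
  assumes A: "A \<in> carrier_mat n n" and i: "i < n" and j: "j < n"
  shows "(A * kry n A) $$ (i,j) = (A ^\<^sub>m Suc j) $$ (i,0)"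
proof -
  have "(A * kry n A) $$ (i,j) = (\<Sum>l<n. A $$ (i,l) * (A ^\<^sub>m j) $$ (l,0))"
    using A i j by (subst mult_entry[of _ n n _ n]) (auto simp: kry_def)
  also have "\<dots> = (A * A ^\<^sub>m j) $$ (i,0)"
    using A i by (subst mult_entry[of _ n n _ n]) auto
  finally show ?thesis using pow_mat_Suc_left[OF A] by simp
qed

lemma kry_inj_core:
  fixes p :: nat
  assumes p: "prime p" and A: "A \<in> carrier_mat n n" and A': "A' \<in> carrier_mat n n"
    and K: "mcong (int p) (kry n A) (kry n A')"
    and chi: "\<forall>k. [coeff (char_poly A) k = coeff (char_poly A') k] (mod int p)"
    and nd: "\<not> int p dvd det (kry n A)"
  shows "mcong (int p) A A'"
proof -
  let ?m = "int p"
  define Kr where "Kr = kry n A"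
  define Kr' where "Kr' = kry n A'"
  have Kr: "Kr \<in> carrier_mat n n" and Kr': "Kr' \<in> carrier_mat n n" by (auto simp: Kr_def Kr'_def kry_def)
  have last: "(B ^\<^sub>m n) $$ (i,0) = - (\<Sum>k<n. coeff (char_poly B) k * (B ^\<^sub>m k) $$ (i,0))"
    if B: "B \<in> carrier_mat n n" and i: "i < n" for B :: "int mat" and i
  proof -
    have "(\<Sum>k\<le>n. coeff (char_poly B) k * (B ^\<^sub>m k) $$ (i,0)) = 0"
      using cayley_hamilton_entry[OF B i] i by simp
    moreover have "coeff (char_poly B) n = 1" using degree_monic_char_poly[OF B] by simp
    ultimately show ?thesis by (simp add: lessThan_Suc_atMost[symmetric] eq_neg_iff_add_eq_0 add.commute)
  qed
  have W: "mcong ?m (A * Kr) (A' * Kr')"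
    unfolding mcong_def
  proof (intro conjI allI impI)
    fix i j assume "i < dim_row (A * Kr)" "j < dim_col (A * Kr)"
    then have i: "i < n" and j: "j < n" using A Kr by auto
    show "[(A * Kr) $$ (i, j) = (A' * Kr') $$ (i, j)] (mod ?m)"
    proof (cases "Suc j < n")
      case True
      then have "[Kr $$ (i, Suc j) = Kr' $$ (i, Suc j)] (mod ?m)"
        using K i Kr by (intro mcongD) (auto simp: Kr_def Kr'_def)
      then show ?thesis using A_kry[OF A i j] A_kry[OF A' i j] True i
        by (simp add: Kr_def Kr'_def kry_def)
    next
      case False
      then have jn: "Suc j = n" using j by simp
      have "[(\<Sum>k<n. coeff (char_poly A) k * (A ^\<^sub>m k) $$ (i,0)) = (\<Sum>k<n. coeff (char_poly A') k * (A' ^\<^sub>m k) $$ (i,0))] (mod ?m)"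
      proof (intro cong_sum cong_mult)
        fix k assume k: "k \<in> {..<n}"
        show "[coeff (char_poly A) k = coeff (char_poly A') k] (mod ?m)" using chi by simp
        have "[Kr $$ (i, k) = Kr' $$ (i, k)] (mod ?m)"
          using K i k Kr by (intro mcongD) (auto simp: Kr_def Kr'_def)
        then show "[(A ^\<^sub>m k) $$ (i,0) = (A' ^\<^sub>m k) $$ (i,0)] (mod ?m)"
          using i k by (simp add: Kr_def Kr'_def kry_def)
      qed
      then have "[(A ^\<^sub>m n) $$ (i,0) = (A' ^\<^sub>m n) $$ (i,0)] (mod ?m)"
        using last[OF A i] last[OF A' i] by (simp add: cong_minus_minus_iff)
      then show ?thesis using A_kry[OF A i j] A_kry[OF A' i j] jn by (simp add: Kr_def Kr'_def)
    qed
  qed (use A A' Kr Kr' in auto)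
  have W2: "mcong ?m (A' * Kr') (A' * Kr)"
    by (rule mcong_mult[OF A' Kr' mcong_refl]) (use K in \<open>simp add: Kr_def Kr'_def mcong_sym\<close>)
  have W3: "mcong ?m (A * Kr) (A' * Kr)" by (rule mcong_trans[OF W W2])
  have W4: "mcong ?m ((A * Kr) * adj_mat Kr) ((A' * Kr) * adj_mat Kr)"
    using adj_mat[OF Kr] A Kr by (intro mcong_mult[OF _ _ W3 mcong_refl]) auto
  have eqA: "(B * Kr) * adj_mat Kr = det Kr \<cdot>\<^sub>m B" if B: "B \<in> carrier_mat n n" for B
  proof -
    have "(B * Kr) * adj_mat Kr = B * (Kr * adj_mat Kr)"
      using B Kr adj_mat[OF Kr] by (simp add: assoc_mult_mat[of _ n n _ n _ n])
    also have "\<dots> = B * (det Kr \<cdot>\<^sub>m 1\<^sub>m n)" using adj_mat[OF Kr] by simp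
    also have "\<dots> = det Kr \<cdot>\<^sub>m B"
      using mult_smult_distrib[OF B one_carrier_mat[of n]] right_mult_one_mat[OF B] by simp
    finally show ?thesis .
  qed
  have W5: "mcong ?m (det Kr \<cdot>\<^sub>m A) (det Kr \<cdot>\<^sub>m A')" using W4 eqA[OF A] eqA[OF A'] by simp
  have cop: "coprime (det Kr) ?m"
  proof -
    have "prime ?m" using p by simp
    then have "coprime ?m (det Kr)" using nd by (intro prime_imp_coprime) (auto simp: Kr_def)
    then show ?thesis by (simp add: coprime_commute)
  qed
  show ?thesis unfolding mcong_def
  proof (intro conjI allI impI)
    fix i j assume "i < dim_row A" "j < dim_col A"
    then have i: "i < n" and j: "j < n" using A by auto
    have "[det Kr * A $$ (i,j) = det Kr * A' $$ (i,j)] (mod ?m)"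
      using mcongD[OF W5, of i j] A A' i j by simp
    then show "[A $$ (i, j) = A' $$ (i, j)] (mod ?m)" using cop by (simp add: cong_mult_lcancel)
  qed (use A A' in auto)
qed

lemma cong_sum_single:
  fixes F :: "nat \<Rightarrow> int"
  assumes "finite S" "a \<in> S" "\<And>i. i \<in> S \<Longrightarrow> i \<noteq> a \<Longrightarrow> m dvd F i"
  shows "[sum F S = F a] (mod m)"
proof -
  have "sum F S = F a + sum F (S - {a})" using assms by (simp add: sum.remove)
  moreover have "m dvd sum F (S - {a})" using assms by (intro dvd_sum) auto
  ultimately show ?thesis by (simp add: cong_iff_dvd_diff)
qed

lemma factor_norm:
  fixes f g h :: "int poly"
  assumes lf: "lead_coeff f = 1" and df: "degree f = d" and dn: "d \<le> n"
    and dh: "degree h = n" and lh: "coeff h n = 1"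
    and fg: "\<forall>k. [coeff h k = coeff (f * g) k] (mod m)"
  shows "\<forall>k > n - d. m dvd coeff g k" and "[coeff g (n - d) = 1] (mod m)"
proof -
  have fd: "coeff f d = 1" using lf df by simp
  have fz: "coeff f i = 0" if "i > d" for i using df that by (intro coeff_eq_0) auto
  have single: "[coeff (f * g) K = coeff g (K - d)] (mod m)"
    if K: "d \<le> K" and hi: "\<forall>k > K - d. m dvd coeff g k" for K
  proof -
    have "coeff (f * g) K = (\<Sum>i\<le>K. coeff f i * coeff g (K - i))" by (rule coeff_mult)
    also have "[\<dots> = coeff f d * coeff g (K - d)] (mod m)"
    proof (rule cong_sum_single)
      fix i assume i: "i \<in> {..K}" "i \<noteq> d"
      show "m dvd coeff f i * coeff g (K - i)"
      proof (cases "i < d")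
        case True
        then have "K - i > K - d" using K by simp
        then show ?thesis using hi by simp
      next
        case False
        then show ?thesis using fz i by simp
      qed
    qed (use K in auto)
    finally show ?thesis using fd by simp
  qed
  show hi: "\<forall>k > n - d. m dvd coeff g k"
  proof (rule ccontr)
    assume "\<not> (\<forall>k > n - d. m dvd coeff g k)"
    define S where "S = {k. k > n - d \<and> \<not> m dvd coeff g k}"
    have Sne: "S \<noteq> {}" using \<open>\<not> _\<close> by (auto simp: S_def)
    have Sfin: "finite S"
    proof (rule finite_subset[of _ "{..degree g}"])
      show "S \<subseteq> {..degree g}"
      proof
        fix k assume "k \<in> S"
        then have "coeff g k \<noteq> 0" by (auto simp: S_def)
        then show "k \<in> {..degree g}" using le_degree by auto
      qed
    qed auto
    define k0 where "k0 = Max S"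
    have k0S: "k0 \<in> S" using Sne Sfin by (simp add: k0_def)
    have above: "m dvd coeff g k" if "k > k0" for k
    proof (rule ccontr)
      assume "\<not> m dvd coeff g k"
      then have "k \<in> S" using that k0S by (auto simp: S_def)
      then have "k \<le> k0" using Sfin by (simp add: k0_def)
      with that show False by simp
    qed
    have "[coeff (f * g) (d + k0) = coeff g k0] (mod m)"
      using single[of "d + k0"] above by simp
    moreover have "coeff h (d + k0) = 0" using k0S dn dh by (intro coeff_eq_0) (auto simp: S_def)
    ultimately have "[0 = coeff g k0] (mod m)" using fg by (metis cong_sym cong_trans)
    then have "m dvd coeff g k0" by (simp add: cong_iff_dvd_diff)
    then show False using k0S by (simp add: S_def)
  qed
  have "[coeff (f * g) n = coeff g (n - d)] (mod m)" using single[of n] hi dn by simp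
  then show "[coeff g (n - d) = 1] (mod m)" using fg lh by (metis cong_sym cong_trans)
qed

lemma cong_poly_mult:
  fixes f f' g g' :: "int poly"
  assumes "\<forall>k. [coeff f k = coeff f' k] (mod m)" "\<forall>k. [coeff g k = coeff g' k] (mod m)"
  shows "[coeff (f * g) k = coeff (f' * g') k] (mod m)"
  unfolding coeff_mult using assms by (intro cong_sum cong_mult) auto



lemma fg_normal:
  fixes f g :: "int poly" and p n :: nat and A :: "int mat"
  assumes p: "prime p" and n: "n \<ge> 1" and A: "A \<in> carrier_mat n n" and dA: "[det A = 1] (mod int p)"
    and lf: "lead_coeff f = 1" and d1: "1 \<le> degree f" and dn: "degree f \<le> n - 1"
    and f0: "[coeff f 0 = 1] (mod int p)"
    and fg: "\<forall>k. [coeff (char_poly A) k = coeff (f * g) k] (mod int p)"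
  shows "\<forall>k. [coeff f k = (if k = 0 then 1 else if k < degree f then coeff f k mod int p
            else if k = degree f then 1 else 0)] (mod int p)"
    and "\<forall>k. [coeff g k = (if k = 0 then (-1)^n else if k < n - degree f then coeff g k mod int p
            else if k = n - degree f then 1 else 0)] (mod int p)"
proof -
  let ?m = "int p"
  let ?d = "degree f"
  show "\<forall>k. [coeff f k = (if k = 0 then 1 else if k < degree f then coeff f k mod int p
            else if k = degree f then 1 else 0)] (mod int p)"
  proof
    fix k
    show "[coeff f k = (if k = 0 then 1 else if k < degree f then coeff f k mod int p
            else if k = degree f then 1 else 0)] (mod int p)"
    proof (cases "k = 0")
      case True then show ?thesis using f0 by simp
    next
      case False
      show ?thesis
      proof (cases "k < ?d")
        case True then show ?thesis using False by (simp add: cong_def)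
      next
        case False2: False
        show ?thesis
        proof (cases "k = ?d")
          case True then show ?thesis using lf False by simp
        next
          case False3: False
          then have "coeff f k = 0" using False2 by (intro coeff_eq_0) auto
          then show ?thesis using False False2 False3 by simp
        qed
      qed
    qed
  qed
  have dh: "degree (char_poly A) = n" and lh: "coeff (char_poly A) n = 1"
    using degree_monic_char_poly[OF A] by auto
  have dnn: "?d \<le> n" using dn by simp
  note fn = factor_norm[OF lf refl dnn dh lh fg]
  have g0: "[coeff g 0 = (-1)^n] (mod ?m)"
  proof -
    have "coeff (f * g) 0 = coeff f 0 * coeff g 0" by (simp add: coeff_mult)
    moreover have "[coeff f 0 * coeff g 0 = 1 * coeff g 0] (mod ?m)" using f0 by (intro cong_mult) auto
    moreover have "coeff (char_poly A) 0 = (-1)^n * det A" by (rule char_poly_coeff0[OF A])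
    moreover have "[(-1)^n * det A = (-1)^n * 1] (mod ?m)" using dA by (intro cong_mult) auto
    ultimately show ?thesis using fg by (metis cong_sym cong_trans mult_1 mult_1_right)
  qed
  show "\<forall>k. [coeff g k = (if k = 0 then (-1)^n else if k < n - degree f then coeff g k mod int p
            else if k = n - degree f then 1 else 0)] (mod int p)"
  proof
    fix k
    have pos: "0 < n - ?d" using dn d1 n by simp
    show "[coeff g k = (if k = 0 then (-1)^n else if k < n - degree f then coeff g k mod int p
            else if k = n - degree f then 1 else 0)] (mod int p)"
    proof (cases "k = 0")
      case True then show ?thesis using g0 by simp
    next
      case False
      show ?thesis
      proof (cases "k < n - ?d")
        case True then show ?thesis using False by (simp add: cong_def)
      next
        case False2: False
        show ?thesis
        proof (cases "k = n - ?d")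
          case True then show ?thesis using fn(2) False by simp
        next
          case False3: False
          then have "?m dvd coeff g k" using False2 fn(1) by auto
          then show ?thesis using False False2 False3 by (simp add: cong_iff_dvd_diff)
        qed
      qed
    qed
  qed
qed



lemma card_PiE_const:
  assumes "finite S"
  shows "card (PiE S (\<lambda>_. {0..<int p})) = p ^ card S"
  using assms by (simp add: card_PiE)

lemma cong_via:
  fixes a b x y m :: int
  shows "[a = x] (mod m) \<Longrightarrow> [b = y] (mod m) \<Longrightarrow> x = y \<Longrightarrow> [a = b] (mod m)"
  by (metis cong_sym cong_trans)

lemma card_G:
  fixes n p :: nat
  assumes n: "n \<ge> 2" and p: "prime p"
  shows "finite {A \<in> X_set n p. \<not> int p dvd det (kry n A)} \<and>
         card {A \<in> X_set n p. \<not> int p dvd det (kry n A)} \<le> (n - 1) * p ^ (n * n - 2)"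
proof -
  let ?m = "int p"
  define G where "G = {A \<in> X_set n p. \<not> int p dvd det (kry n A)}"
  define Pf where "Pf A f \<longleftrightarrow> 1 \<le> degree f \<and> degree f \<le> n - 1 \<and> [coeff f 0 = 1] (mod ?m) \<and>
      has_monic_factor_mod p f (char_poly A)" for A f
  define fA where "fA A = (SOME f. Pf A f)" for A
  define gA where "gA A = (SOME g. \<forall>k. [coeff (char_poly A) k = coeff (fA A * g) k] (mod ?m))" for A
  define IK where "IK = {0..<n} \<times> {1..<n}"
  define V where "V = {0..<?m}"
  define \<Phi> where "\<Phi> A = (degree (fA A), restrict (\<lambda>(i,j). kry n A $$ (i,j) mod ?m) IK,
      restrict (\<lambda>k. coeff (fA A) k mod ?m) {1..<degree (fA A)},
      restrict (\<lambda>k. coeff (gA A) k mod ?m) {1..<n - degree (fA A)})" for A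
  define Tgt where "Tgt = Sigma {1..n-1} (\<lambda>d. PiE IK (\<lambda>_. V) \<times> PiE {1..<d} (\<lambda>_. V) \<times> PiE {1..<n-d} (\<lambda>_. V))"
  have p0: "p > 0" using p prime_gt_0_nat by blast
  have props: "A \<in> carrier_mat n n \<and> (\<forall>i<n. \<forall>j<n. 0 \<le> A $$ (i,j) \<and> A $$ (i,j) < ?m) \<and> [det A = 1] (mod ?m)
     \<and> lead_coeff (fA A) = 1 \<and> 1 \<le> degree (fA A) \<and> degree (fA A) \<le> n - 1 \<and> [coeff (fA A) 0 = 1] (mod ?m)
     \<and> (\<forall>k. [coeff (char_poly A) k = coeff (fA A * gA A) k] (mod ?m))" if A: "A \<in> G" for A
  proof -
    have AX: "A \<in> X_set n p" using A by (simp add: G_def)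
    then have "\<exists>f. Pf A f" by (auto simp: X_set_def Pf_def)
    then have Pf: "Pf A (fA A)" unfolding fA_def by (rule someI_ex)
    then have "\<exists>g. \<forall>k. [coeff (char_poly A) k = coeff (fA A * g) k] (mod ?m)"
      by (simp add: Pf_def has_monic_factor_mod_def)
    then have "\<forall>k. [coeff (char_poly A) k = coeff (fA A * gA A) k] (mod ?m)"
      unfolding gA_def by (rule someI_ex)
    then show ?thesis using AX Pf by (auto simp: X_set_def SL_mod_def Pf_def has_monic_factor_mod_def)
  qed
  have PhiT: "\<Phi> ` G \<subseteq> Tgt"
  proof
    fix x assume "x \<in> \<Phi> ` G"
    then obtain A where A: "A \<in> G" and x: "x = \<Phi> A" by auto
    have V: "y mod ?m \<in> V" for y using p0 by (simp add: V_def)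
    show "x \<in> Tgt" using props[OF A] V unfolding x \<Phi>_def Tgt_def by (auto simp: restrict_PiE_iff)
  qed
  have inj: "inj_on \<Phi> G"
  proof (rule inj_onI)
    fix A A' assume A: "A \<in> G" and A': "A' \<in> G" and eq: "\<Phi> A = \<Phi> A'"
    note PA = props[OF A] and PA' = props[OF A']
    define f where "f = fA A"
    define f' where "f' = fA A'"
    define g where "g = gA A"
    define g' where "g' = gA A'"
    define d where "d = degree f"
    have dd: "degree f' = d" using eq by (simp add: \<Phi>_def d_def f_def f'_def)
    have eqK: "restrict (\<lambda>(i,j). kry n A $$ (i,j) mod ?m) IK = restrict (\<lambda>(i,j). kry n A' $$ (i,j) mod ?m) IK"
      using eq by (simp add: \<Phi>_def)
    have eqf: "restrict (\<lambda>k. coeff f k mod ?m) {1..<d} = restrict (\<lambda>k. coeff f' k mod ?m) {1..<d}"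
    proof -
      have "restrict (\<lambda>k. coeff f k mod ?m) {1..<degree f} = restrict (\<lambda>k. coeff f' k mod ?m) {1..<degree f'}"
        using eq unfolding \<Phi>_def f_def f'_def prod.inject by blast
      then show ?thesis using dd by (simp add: d_def)
    qed
    have eqg: "restrict (\<lambda>k. coeff g k mod ?m) {1..<n-d} = restrict (\<lambda>k. coeff g' k mod ?m) {1..<n-d}"
    proof -
      have "restrict (\<lambda>k. coeff g k mod ?m) {1..<n - degree f} = restrict (\<lambda>k. coeff g' k mod ?m) {1..<n - degree f'}"
        using eq unfolding \<Phi>_def f_def f'_def g_def g'_def prod.inject by blast
      then show ?thesis using dd by (simp add: d_def)
    qed
    have n1: "n \<ge> 1" using n by simp
    have nf: "(\<forall>k. [coeff (fA B) k = (if k = 0 then 1 else if k < degree (fA B) then coeff (fA B) k mod int p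
            else if k = degree (fA B) then 1 else 0)] (mod int p)) \<and>
          (\<forall>k. [coeff (gA B) k = (if k = 0 then (-1)^n else if k < n - degree (fA B) then coeff (gA B) k mod int p
            else if k = n - degree (fA B) then 1 else 0)] (mod int p))" if B: "B \<in> G" for B
    proof -
      have c1: "B \<in> carrier_mat n n" "[det B = 1] (mod int p)" "lead_coeff (fA B) = 1" "1 \<le> degree (fA B)"
        "degree (fA B) \<le> n - 1" "[coeff (fA B) 0 = 1] (mod int p)"
        "\<forall>k. [coeff (char_poly B) k = coeff (fA B * gA B) k] (mod int p)"
        using props[OF B] by auto
      note r = fg_normal[OF p n1 c1]
      show ?thesis by (rule conjI[OF r(1) r(2)])
    qed
    have cf: "[coeff f k = coeff f' k] (mod ?m)" for k
    proof -
      have e1: "[coeff f k = (if k = 0 then 1 else if k < d then coeff f k mod ?m else if k = d then 1 else 0)] (mod ?m)"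
        unfolding f_def d_def by (rule spec[OF conjunct1[OF nf[OF A]]])
      have e2: "[coeff f' k = (if k = 0 then 1 else if k < d then coeff f' k mod ?m else if k = d then 1 else 0)] (mod ?m)"
        using spec[OF conjunct1[OF nf[OF A']], of k] dd by (simp only: f'_def)
      show ?thesis
        by (rule cong_via[OF e1 e2]) (use fun_cong[OF eqf, of k] in auto)
    qed
    have cg: "[coeff g k = coeff g' k] (mod ?m)" for k
    proof -
      have e1: "[coeff g k = (if k = 0 then (-1)^n else if k < n - d then coeff g k mod ?m else if k = n - d then 1 else 0)] (mod ?m)"
        unfolding g_def f_def d_def by (rule spec[OF conjunct2[OF nf[OF A]]])
      have e2: "[coeff g' k = (if k = 0 then (-1)^n else if k < n - d then coeff g' k mod ?m else if k = n - d then 1 else 0)] (mod ?m)"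
        using spec[OF conjunct2[OF nf[OF A']], of k] dd by (simp only: f'_def g'_def)
      show ?thesis
        by (rule cong_via[OF e1 e2]) (use fun_cong[OF eqg, of k] in auto)
    qed
    have chi: "\<forall>k. [coeff (char_poly A) k = coeff (char_poly A') k] (mod ?m)"
    proof
      fix k
      have "[coeff (char_poly A) k = coeff (f * g) k] (mod ?m)" using PA by (simp add: f_def g_def)
      moreover have "[coeff (f * g) k = coeff (f' * g') k] (mod ?m)" using cf cg by (intro cong_poly_mult) auto
      moreover have "[coeff (char_poly A') k = coeff (f' * g') k] (mod ?m)" using PA' by (simp add: f'_def g'_def)
      ultimately show "[coeff (char_poly A) k = coeff (char_poly A') k] (mod ?m)" by (meson cong_sym cong_trans)
    qed
    have CA: "A \<in> carrier_mat n n" and CA': "A' \<in> carrier_mat n n" using PA PA' by auto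
    have K: "mcong ?m (kry n A) (kry n A')"
      unfolding mcong_def
    proof (intro conjI allI impI)
      fix i j assume "i < dim_row (kry n A)" "j < dim_col (kry n A)"
      then have i: "i < n" and j: "j < n" by (auto simp: kry_def)
      show "[kry n A $$ (i, j) = kry n A' $$ (i, j)] (mod ?m)"
      proof (cases "j = 0")
        case True then show ?thesis using i CA CA' by (simp add: kry_def)
      next
        case False
        then have "(i,j) \<in> IK" using i j by (auto simp: IK_def)
        then have "kry n A $$ (i,j) mod ?m = kry n A' $$ (i,j) mod ?m"
          using fun_cong[OF eqK, of "(i,j)"] by simp
        then show ?thesis by (simp add: cong_def)
      qed
    qed (auto simp: kry_def)
    have nd: "\<not> ?m dvd det (kry n A)" using A by (simp add: G_def)
    have mc: "mcong ?m A A'" by (rule kry_inj_core[OF p CA CA' K chi nd])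
    show "A = A'"
    proof (rule eq_matI)
      fix i j assume "i < dim_row A'" "j < dim_col A'"
      then have i: "i < n" and j: "j < n" using CA' by auto
      have "[A $$ (i,j) = A' $$ (i,j)] (mod ?m)" using mc i j CA by (intro mcongD) auto
      then show "A $$ (i, j) = A' $$ (i, j)" using PA PA' i j by (intro cong_less_imp_eq_int) auto
    qed (use CA CA' in auto)
  qed
  have finT: "finite Tgt" unfolding Tgt_def IK_def V_def by (intro finite_SigmaI finite_cartesian_product finite_PiE) auto
  have cardT: "card Tgt = (n - 1) * p ^ (n * n - 2)"
  proof -
    have cV: "card V = p" by (simp add: V_def)
    have cIK: "card IK = n * (n - 1)" by (simp add: IK_def card_cartesian_product)
    have trm2: "card (PiE IK (\<lambda>_. V) \<times> PiE {1..<d} (\<lambda>_. V) \<times> PiE {1..<n-d} (\<lambda>_. V)) = p ^ (n * n - 2)"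
      if d: "d \<in> {1..n-1}" for d
    proof -
      have "card (PiE IK (\<lambda>_. V) \<times> PiE {1..<d} (\<lambda>_. V) \<times> PiE {1..<n-d} (\<lambda>_. V)) =
            p ^ (n * (n - 1)) * p ^ (d - 1) * p ^ (n - d - 1)"
        using cV cIK by (simp add: card_cartesian_product card_PiE IK_def)
      also have "\<dots> = p ^ (n * (n - 1) + (d - 1) + (n - d - 1))" by (simp add: power_add)
      also have "n * (n - 1) + (d - 1) + (n - d - 1) = n * n - 2"
      proof -
        have e: "n * (n - 1) = n * n - n" by (simp add: diff_mult_distrib2)
        have nn: "n \<le> n * n" by simp
        have d1: "1 \<le> d" "d \<le> n - 1" using d by auto
        show ?thesis using e nn d1 n by linarith
      qed
      finally show ?thesis .
    qed
    have "card Tgt = (\<Sum>d\<in>{1..n-1}. card (PiE IK (\<lambda>_. V) \<times> PiE {1..<d} (\<lambda>_. V) \<times> PiE {1..<n-d} (\<lambda>_. V)))"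
      unfolding Tgt_def by (rule card_SigmaI) (auto simp: IK_def V_def intro!: finite_PiE)
    also have "\<dots> = (\<Sum>d\<in>{1..n-1}. p ^ (n * n - 2))" by (intro sum.cong refl trm2)
    also have "\<dots> = (n - 1) * p ^ (n * n - 2)" by simp
    finally show ?thesis .
  qed
  have finG: "finite G" by (rule inj_on_finite[OF inj PhiT finT])
  have "card G = card (\<Phi> ` G)" using inj by (simp add: card_image)
  also have "\<dots> \<le> card Tgt" by (rule card_mono[OF finT PhiT])
  finally show ?thesis using finG cardT by (simp add: G_def)
qed



lemma plm_carrier[simp]: "plm n B s t \<in> carrier_mat n n" by (simp add: plm_def)

lemma plm_shift: "plm n B s t = plm n B 0 t + s \<cdot>\<^sub>m 1\<^sub>m n"
  by (rule eq_matI) (auto simp: plm_def)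

lemma det_plm: "det (plm n B s t) = poly (char_poly (- plm n B 0 t)) s"
proof -
  have C: "- plm n B 0 t \<in> carrier_mat n n" by simp
  have "poly (char_poly (- plm n B 0 t)) s = det (s \<cdot>\<^sub>m 1\<^sub>m n - (- plm n B 0 t))"
    by (rule char_poly_eval[OF C])
  also have "s \<cdot>\<^sub>m 1\<^sub>m n - (- plm n B 0 t) = plm n B s t"
    by (rule eq_matI) (auto simp: plm_def)
  finally show ?thesis by simp
qed

lemma card_GB:
  fixes n p :: nat
  assumes n: "n \<ge> 1" and p: "prime p" and B: "B \<in> carrier_mat n n"
  shows "card {st \<in> {0..<int p} \<times> {0..<int p}. int p dvd det (kry n (plm n B (fst st) (snd st))) \<and>
            [det (plm n B (fst st) (snd st)) = 1] (mod int p)} \<le> (\<Sum>i<n. i) * n"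
proof -
  let ?m = "int p"
  define V where "V = {0..<?m}"
  define N where "N = (\<Sum>i<n. i)"
  obtain q where dq: "degree q \<le> N" and cq: "coeff q N = 1" and evq: "\<And>t. poly q t = det (kry n (plm n B 0 t))"
    using kry_poly[OF B] unfolding N_def by blast
  have p1: "\<not> ?m dvd 1" using p using prime_gt_1_nat[OF p] by simp
  define Z where "Z = {t \<in> V. ?m dvd poly q t}"
  have cZ: "card Z \<le> N"
    using roots_mod_card[OF p, of q N] cq p1 dq by (simp add: Z_def V_def)
  define h where "h t = char_poly (- plm n B 0 t) - 1" for t
  define R where "R t = {s \<in> V. ?m dvd poly (h t) s}" for t
  have cR: "card (R t) \<le> n" for t
  proof -
    have C: "- plm n B 0 t \<in> carrier_mat n n" by simp
    have dc: "degree (char_poly (- plm n B 0 t)) = n" and lc: "coeff (char_poly (- plm n B 0 t)) n = 1"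
      using degree_monic_char_poly[OF C] by auto
    have ch: "coeff (h t) n = 1" using lc n by (simp add: h_def)
    have dh: "degree (h t) \<le> n" unfolding h_def using dc
      by (metis degree_1 degree_diff_le le_zero_eq nat_le_linear)
    show ?thesis using roots_mod_card[OF p, of "h t" n] ch p1 dh by (simp add: R_def V_def)
  qed
  let ?GB = "{st \<in> {0..<int p} \<times> {0..<int p}. int p dvd det (kry n (plm n B (fst st) (snd st))) \<and>
            [det (plm n B (fst st) (snd st)) = 1] (mod int p)}"
  have sub: "?GB \<subseteq> (\<Union>t\<in>Z. (\<lambda>s. (s,t)) ` R t)"
  proof
    fix st assume st: "st \<in> ?GB"
    obtain s t where stst: "st = (s,t)" by (cases st)
    have "det (kry n (plm n B s t)) = det (kry n (plm n B 0 t))"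
      unfolding plm_shift[of n B s t] by (rule kry_shift) simp
    then have tZ: "t \<in> Z" using st stst evq by (auto simp: Z_def V_def)
    have "poly (h t) s = det (plm n B s t) - 1" by (simp add: h_def det_plm)
    then have "s \<in> R t" using st stst by (auto simp: R_def V_def cong_iff_dvd_diff)
    then show "st \<in> (\<Union>t\<in>Z. (\<lambda>s. (s,t)) ` R t)" using tZ stst by auto
  qed
  have finZ: "finite Z" unfolding Z_def V_def by (rule finite_subset[of _ "{0..<int p}"]) auto
  have finR: "finite (R t)" for t unfolding R_def V_def by (rule finite_subset[of _ "{0..<int p}"]) auto
  have "card ?GB \<le> card (\<Union>t\<in>Z. (\<lambda>s. (s,t)) ` R t)"
    by (rule card_mono[OF _ sub]) (auto simp: finZ finR)
  also have "\<dots> \<le> (\<Sum>t\<in>Z. card ((\<lambda>s. (s,t)) ` R t))" by (rule card_UN_le[OF finZ])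
  also have "\<dots> \<le> (\<Sum>t\<in>Z. n)" by (intro sum_mono order.trans[OF card_image_le cR]) (simp add: finR)
  also have "\<dots> = card Z * n" by simp
  also have "\<dots> \<le> N * n" using cZ by simp
  finally show ?thesis by (simp add: N_def)
qed



lemma card_T:
  fixes n p :: nat
  assumes n: "n \<ge> 2" and p: "prime p"
  shows "finite {A \<in> SL_mod n p. int p dvd det (kry n A)} \<and>
         card {A \<in> SL_mod n p. int p dvd det (kry n A)} \<le> p ^ (n * n - 2) * ((\<Sum>i<n. i) * n)"
proof -
  let ?m = "int p"
  define V where "V = {0..<?m}"
  define T where "T = {A \<in> SL_mod n p. int p dvd det (kry n A)}"
  define Bset where "Bset = {B \<in> carrier_mat n n. (\<forall>i<n. \<forall>j<n. B $$ (i,j) \<in> V) \<and> B $$ (0,0) = 0 \<and> B $$ (1,0) = 0}"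
  define I' where "I' = {0..<n} \<times> {0..<n} - {(0,0),(1,0)}"
  define GB where "GB B = {st \<in> {0..<int p} \<times> {0..<int p}. int p dvd det (kry n (plm n B (fst st) (snd st))) \<and>
            [det (plm n B (fst st) (snd st)) = 1] (mod int p)}" for B
  define red where "red M = mat n n (\<lambda>(i,j). M $$ (i,j) mod ?m)" for M
  define N where "N = (\<Sum>i<n. i)"
  have p0: "p > 0" using p prime_gt_0_nat by blast
  define \<psi> where "\<psi> B = restrict (\<lambda>(i,j). B $$ (i,j)) I'" for B :: "int mat"
  have psiS: "\<psi> ` Bset \<subseteq> PiE I' (\<lambda>_. V)"
  proof (rule image_subsetI)
    fix B assume B: "B \<in> Bset"
    show "\<psi> B \<in> PiE I' (\<lambda>_. V)" unfolding \<psi>_def restrict_PiE_iff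
    proof
      fix x assume x: "x \<in> I'"
      then obtain i j where "x = (i,j)" "i < n" "j < n" by (auto simp: I'_def)
      then show "(case x of (i, j) \<Rightarrow> B $$ (i, j)) \<in> V" using B by (auto simp: Bset_def)
    qed
  qed
  have psiI: "inj_on \<psi> Bset"
  proof (rule inj_onI)
    fix B B' assume B: "B \<in> Bset" and B': "B' \<in> Bset" and e: "\<psi> B = \<psi> B'"
    show "B = B'"
    proof (rule eq_matI)
      fix i j assume "i < dim_row B'" "j < dim_col B'"
      then have i: "i < n" and j: "j < n" using B' by (auto simp: Bset_def)
      show "B $$ (i,j) = B' $$ (i,j)"
      proof (cases "(i,j) \<in> I'")
        case True then show ?thesis using fun_cong[OF e, of "(i,j)"] by (simp add: \<psi>_def)
      next
        case False
        then have "(i,j) = (0,0) \<or> (i,j) = (1,0)" using i j by (auto simp: I'_def)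
        then show ?thesis using B B' by (auto simp: Bset_def)
      qed
    qed (use B B' in \<open>auto simp: Bset_def\<close>)
  qed
  have finPi: "finite (PiE I' (\<lambda>_. V))" by (auto simp: I'_def V_def intro!: finite_PiE)
  have finB: "finite Bset" by (rule inj_on_finite[OF psiI psiS finPi])
  have cI': "card I' = n * n - 2"
  proof -
    have "card I' = card ({0..<n} \<times> {0..<n}) - card {(0::nat,0::nat),(1,0)}"
      unfolding I'_def by (rule card_Diff_subset) (use n in auto)
    then show ?thesis by (simp add: card_cartesian_product)
  qed
  have cB: "card Bset \<le> p ^ (n * n - 2)"
  proof -
    have "card Bset = card (\<psi> ` Bset)" using psiI by (simp add: card_image)
    also have "\<dots> \<le> card (PiE I' (\<lambda>_. V))" by (rule card_mono[OF finPi psiS])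
    also have "\<dots> = p ^ (n * n - 2)" using cI' by (simp add: card_PiE V_def I'_def)
    finally show ?thesis .
  qed
  have cG: "card (GB B) \<le> N * n" if "B \<in> Bset" for B
    using card_GB[of n p B] that n p by (simp add: GB_def N_def Bset_def)
  have finGB: "finite (GB B)" for B
    unfolding GB_def by (rule finite_subset[of _ "{0..<int p} \<times> {0..<int p}"]) auto
  have sub: "T \<subseteq> (\<Union>B\<in>Bset. (\<lambda>st. red (plm n B (fst st) (snd st))) ` GB B)"
  proof
    fix A assume AT: "A \<in> T"
    then have A: "A \<in> carrier_mat n n" and rng: "\<forall>i<n. \<forall>j<n. 0 \<le> A $$ (i,j) \<and> A $$ (i,j) < ?m"
      and dA: "[det A = 1] (mod ?m)" and dK: "?m dvd det (kry n A)"
      by (auto simp: T_def SL_mod_def)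
    define s where "s = A $$ (0,0)"
    define t where "t = A $$ (1,0)"
    define B where "B = mat n n (\<lambda>(i,j). (A $$ (i,j) - (if i = j then s else 0) - (if i = Suc j then t else 0)) mod ?m)"
    have n0: "0 < n" "1 < n" using n by auto
    have BB: "B \<in> Bset" using p0 n0 by (auto simp: B_def Bset_def V_def s_def t_def)
    have mc: "mcong ?m (plm n B s t) A"
      unfolding mcong_def
    proof (intro conjI allI impI)
      fix i j assume "i < dim_row (plm n B s t)" "j < dim_col (plm n B s t)"
      then have i: "i < n" and j: "j < n" by (auto simp: plm_def)
      let ?x = "A $$ (i,j) - (if i = j then s else 0) - (if i = Suc j then t else 0)"
      have "[?x mod ?m + (if i = j then s else 0) + (if i = Suc j then t else 0) =
             ?x + (if i = j then s else 0) + (if i = Suc j then t else 0)] (mod ?m)"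
        by (intro cong_add cong_refl) (simp add: cong_def)
      then show "[plm n B s t $$ (i, j) = A $$ (i, j)] (mod ?m)"
        using i j by (simp add: plm_def B_def)
    qed (use A in \<open>auto simp: plm_def\<close>)
    have PC: "plm n B s t \<in> carrier_mat n n" by simp
    have redA: "red (plm n B s t) = A"
    proof (rule eq_matI)
      fix i j assume "i < dim_row A" "j < dim_col A"
      then have i: "i < n" and j: "j < n" using A by auto
      have "plm n B s t $$ (i,j) mod ?m = A $$ (i,j) mod ?m" using mcongD[OF mc, of i j] i j
        by (simp add: cong_def plm_def)
      also have "\<dots> = A $$ (i,j)" using rng i j by simp
      finally show "red (plm n B s t) $$ (i, j) = A $$ (i, j)" using i j by (simp add: red_def)
    qed (use A in \<open>auto simp: red_def\<close>)
    have c1: "[det (kry n (plm n B s t)) = det (kry n A)] (mod ?m)"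
    proof -
      have "kry n (plm n B s t) \<in> carrier_mat n n" by (simp add: kry_def)
      then show ?thesis by (rule mcong_det[OF _ mcong_kry[OF PC mc]])
    qed
    have c2: "[det (plm n B s t) = det A] (mod ?m)" by (rule mcong_det[OF PC mc])
    have stG: "(s,t) \<in> GB B"
    proof -
      have "s \<in> {0..<?m}" "t \<in> {0..<?m}" using rng n0 by (auto simp: s_def t_def)
      moreover have "?m dvd det (kry n (plm n B s t))" using c1 dK by (simp add: cong_dvd_iff)
      moreover have "[det (plm n B s t) = 1] (mod ?m)" using c2 dA by (rule cong_trans)
      ultimately show ?thesis by (simp add: GB_def)
    qed
    show "A \<in> (\<Union>B\<in>Bset. (\<lambda>st. red (plm n B (fst st) (snd st))) ` GB B)"
      using BB stG redA by force
  qed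
  have finU: "finite (\<Union>B\<in>Bset. (\<lambda>st. red (plm n B (fst st) (snd st))) ` GB B)"
    using finB finGB by auto
  have "card T \<le> card (\<Union>B\<in>Bset. (\<lambda>st. red (plm n B (fst st) (snd st))) ` GB B)"
    by (rule card_mono[OF finU sub])
  also have "\<dots> \<le> (\<Sum>B\<in>Bset. card ((\<lambda>st. red (plm n B (fst st) (snd st))) ` GB B))"
    by (rule card_UN_le[OF finB])
  also have "\<dots> \<le> (\<Sum>B\<in>Bset. N * n)" by (intro sum_mono order.trans[OF card_image_le cG]) (auto simp: finGB)
  also have "\<dots> = card Bset * (N * n)" by simp
  also have "\<dots> \<le> p ^ (n * n - 2) * (N * n)" using cB by simp
  finally show ?thesis using finite_subset[OF sub finU] by (simp add: T_def N_def)
qed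



lemma card_X_bound:
  fixes n p :: nat
  assumes n: "n \<ge> 2" and p: "prime p"
  shows "card (X_set n p) \<le> ((n - 1) + (\<Sum>i<n. i) * n) * p ^ (n * n - 2)"
proof -
  let ?G = "{A \<in> X_set n p. \<not> int p dvd det (kry n A)}"
  let ?T = "{A \<in> SL_mod n p. int p dvd det (kry n A)}"
  have sub: "X_set n p \<subseteq> ?G \<union> ?T" by (auto simp: X_set_def)
  note G = card_G[OF n p] and T = card_T[OF n p]
  have "card (X_set n p) \<le> card (?G \<union> ?T)" using G T by (intro card_mono[OF _ sub]) auto
  also have "\<dots> \<le> card ?G + card ?T" by (rule card_Un_le)
  also have "\<dots> \<le> (n - 1) * p ^ (n * n - 2) + p ^ (n * n - 2) * ((\<Sum>i<n. i) * n)"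
    using G T by (intro add_mono) auto
  also have "\<dots> = ((n - 1) + (\<Sum>i<n. i) * n) * p ^ (n * n - 2)" by (simp add: algebra_simps)
  finally show ?thesis .
qed

theorem lemma6p1:
  fixes n :: nat
  assumes "n \<ge> 2"
  shows "(\<lambda>p. real (card (X_set n p))) \<in>
           o[inf at_top (principal {p::nat. prime p})](\<lambda>p. real p ^ (n\<^sup>2 - 1))"
proof (rule landau_o.smallI)
  fix c :: real assume c: "c > 0"
  define C where "C = ((n - 1) + (\<Sum>i<n. i) * n)"
  have ex: "n\<^sup>2 - 1 = Suc (n * n - 2)"
  proof -
    have "4 \<le> n * n" using mult_le_mono[OF assms assms] by simp
    then show ?thesis by (simp add: power2_eq_square)
  qed
  define N0 where "N0 = nat \<lceil>real C / c\<rceil>"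
  have "\<forall>p\<ge>N0. p \<in> {p. prime p} \<longrightarrow> norm (real (card (X_set n p))) \<le> c * norm (real p ^ (n\<^sup>2 - 1))"
  proof (intro allI impI)
    fix p :: nat assume pN: "p \<ge> N0" and pp: "p \<in> {p. prime p}"
    then have p: "prime p" by simp
    have "real C / c \<le> real p"
    proof -
      have "real C / c \<le> real (nat \<lceil>real C / c\<rceil>)" by linarith
      also have "\<dots> \<le> real p" using pN by (simp add: N0_def)
      finally show ?thesis .
    qed
    then have Cp: "real C \<le> c * real p" using c by (simp add: field_simps)
    have "real (card (X_set n p)) \<le> real (C * p ^ (n * n - 2))"
    proof -
      have "card (X_set n p) \<le> C * p ^ (n * n - 2)" using card_X_bound[OF assms p] by (simp only: C_def)
      then show ?thesis by (simp only: of_nat_le_iff)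
    qed
    also have "\<dots> = real C * real p ^ (n * n - 2)" by simp
    also have "\<dots> \<le> c * real p * real p ^ (n * n - 2)" by (rule mult_right_mono[OF Cp]) simp
    also have "\<dots> = c * real p ^ (n\<^sup>2 - 1)" unfolding ex by simp
    finally show "norm (real (card (X_set n p))) \<le> c * norm (real p ^ (n\<^sup>2 - 1))" by simp
  qed
  then show "\<forall>\<^sub>F x in inf at_top (principal {p. prime p}). norm (real (card (X_set n x))) \<le> c * norm (real x ^ (n\<^sup>2 - 1))"
    unfolding eventually_inf_principal eventually_at_top_linorder by blast
qed


end
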